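(* There are uncountably many distinct locating-paired-dominating sets of the king grid that have density $2/9$.
   Context: The king grid is the infinite graph with vertex set $\mathbb{Z}\times\mathbb{Z}$ in which two distinct vertices are adjacent iff their Euclidean distance is at most $\sqrt2$. $N(v)$ is the open neighborhood of $v$ and $N[v]=N(v)\cup\{v\}$. A set $S\subset V$ is a locating-paired-dominating set (LPDS) if (i) every vertex $v$ satisfies $N[v]\cap S\neq\emptyset$, (ii) the induced subgraph $G[S]$ has a perfect matching, and (iii) for any two distinct vertices $u,v\in V\setminus S$, $N(u)\cap S\neq N(v)\cap S$. For $k\ge 0$ and $u\in V$, $N^k[u]=\{x: d(u,x)\le k\}$ with $d$ the graph distance. The density of $A\subset V$ is $D(A)=\limsup_{k\to\infty}\frac{|A\cap N^k[u]|}{|N^k[u]|}$ (independent of $u$). *)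

theory Defs
  imports "HOL-Analysis.Analysis" "HOL-Library.Liminf_Limsup"
begin

type_synonym vtx = "int \<times> int"

definition king_adj :: "vtx \<Rightarrow> vtx \<Rightarrow> bool" where
  "king_adj u v \<longleftrightarrow> u \<noteq> v \<and>
     real_of_int ((fst u - fst v)^2 + (snd u - snd v)^2) \<le> 2"

definition nbh :: "vtx \<Rightarrow> vtx set" where
  "nbh v = {u. king_adj v u}"

definition cnbh :: "vtx \<Rightarrow> vtx set" where
  "cnbh v = insert v (nbh v)"

fun walk :: "nat \<Rightarrow> vtx \<Rightarrow> vtx \<Rightarrow> bool" where
  "walk 0 u v \<longleftrightarrow> u = v"
| "walk (Suc n) u v \<longleftrightarrow> (\<exists>w. king_adj u w \<and> walk n w v)"

text \<open>Graph distance (the king grid is connected).\<close>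
definition gdist :: "vtx \<Rightarrow> vtx \<Rightarrow> nat" where
  "gdist u v = (LEAST n. walk n u v)"

definition ball_k :: "nat \<Rightarrow> vtx \<Rightarrow> vtx set" where
  "ball_k k u = {x. gdist u x \<le> k}"

definition has_perfect_matching :: "vtx set \<Rightarrow> bool" where
  "has_perfect_matching S \<longleftrightarrow> (\<exists>M :: vtx set set.
     (\<forall>e\<in>M. \<exists>a b. e = {a, b} \<and> a \<in> S \<and> b \<in> S \<and> king_adj a b) \<and>
     (\<forall>e\<in>M. \<forall>e'\<in>M. e \<noteq> e' \<longrightarrow> e \<inter> e' = {}) \<and>
     (\<forall>v\<in>S. \<exists>e\<in>M. v \<in> e))"

definition is_LPDS :: "vtx set \<Rightarrow> bool" where
  "is_LPDS S \<longleftrightarrow>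
     (\<forall>v. cnbh v \<inter> S \<noteq> {}) \<and>
     has_perfect_matching S \<and>
     (\<forall>u v. u \<notin> S \<longrightarrow> v \<notin> S \<longrightarrow> u \<noteq> v \<longrightarrow> nbh u \<inter> S \<noteq> nbh v \<inter> S)"

text \<open>Density with respect to centre u (the paper notes independence of u).\<close>
definition density_at :: "vtx \<Rightarrow> vtx set \<Rightarrow> ereal" where
  "density_at u A = limsup (\<lambda>k. ereal (real (card (A \<inter> ball_k k u)) / real (card (ball_k k u))))"

end

theory Submission
  imports Defs "HOL-Real_Asymp.Real_Asymp"
begin

definition inW :: "int list \<Rightarrow> int \<Rightarrow> int \<Rightarrow> bool" where
  "inW w dx dy = ((dx - w ! nat (dy + 3)) mod 9 \<in> {0,4})"

definition adjo :: "int \<times> int \<Rightarrow> int \<times> int \<Rightarrow> bool" where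
  "adjo p q = (p \<noteq> q \<and> \<bar>fst p - fst q\<bar> \<le> 1 \<and> \<bar>snd p - snd q\<bar> \<le> 1)"

definition off1 :: "(int \<times> int) list" where
  "off1 = [(-1,-1), (-1,0), (-1,1), (0,-1), (0,1), (1,-1), (1,0), (1,1)]"
definition off2 :: "(int \<times> int) list" where
  "off2 = [(-2,-2), (-2,-1), (-2,0), (-2,1), (-2,2), (-1,-2), (-1,-1), (-1,0), (-1,1), (-1,2), (0,-2), (0,-1), (0,1), (0,2), (1,-2), (1,-1), (1,0), (1,1), (1,2), (2,-2), (2,-1), (2,0), (2,1), (2,2)]"
definition off3 :: "(int \<times> int) list" where
  "off3 = [(i,j). i \<leftarrow> [-3..3], j \<leftarrow> [-3..3]]"

definition chkv :: "int list \<Rightarrow> int \<times> int \<Rightarrow> bool" where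
  "chkv w v = (inW w (fst v) (snd v) \<or>
     list_ex (\<lambda>(p,q). inW w p q \<and> \<not> adjo v (p,q)) off1 \<or>
     list_ex (\<lambda>(p,q). inW w (fst v + p) (snd v + q) \<and> \<not> adjo (0,0) (fst v + p, snd v + q)) off1)"

definition chk :: "bool \<Rightarrow> int list \<Rightarrow> bool" where
  "chk par w = (
    (inW w 0 0 \<or> list_ex (\<lambda>(i,j). inW w i j) off1) \<and>
    (inW w 0 0 \<longrightarrow> list_ex (\<lambda>i. inW w i (if par then 1 else -1)) [-1..1]) \<and>
    (\<not> inW w 0 0 \<longrightarrow> list_all (chkv w) off2))"

definition W0 :: "(bool \<times> int list) list" where
 "W0 = [(False, [0,4,6,2,0,8,6]), (False, [0,5,7,3,1,0,7]), (False, [0,8,6,2,4,0,7]), (False, [1,0,7,3,5,0,7]), (False, [4,0,7,2,4,5,7]), (False, [4,5,7,2,0,4,6]), (False, [4,5,7,2,0,5,7]), (False, [5,0,7,2,4,5,7]), (False, [6,2,0,8,6,2,4]), (False, [6,2,4,0,7,2,4]), (False, [7,2,0,4,6,2,0]), (False, [7,2,0,5,7,3,1]), (False, [7,2,4,5,7,2,0]), (False, [7,3,1,0,7,3,5]), (False, [7,3,5,0,7,2,4]), (True, [0,7,2,4,5,7,2]), (True, [0,7,3,5,0,7,2]), (True, [2,0,4,6,2,0,8]), (True, [2,0,5,7,3,1,0]), (True, [2,0,8,6,2,4,0]), (True, [2,4,0,7,2,4,5]), (True, [2,4,5,7,2,0,4]), (True, [2,4,5,7,2,0,5]), (True, [3,1,0,7,3,5,0]),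 (True, [3,5,0,7,2,4,5]), (True, [4,6,2,0,8,6,2]), (True, [5,7,2,0,4,6,2]), (True, [5,7,2,0,5,7,3]), (True, [5,7,3,1,0,7,3]), (True, [8,6,2,4,0,7,2])]"

definition allchk :: bool where
  "allchk = list_all (\<lambda>(par,w). list_all (\<lambda>x0. chk par (map (\<lambda>v. (v - x0) mod 9) w)) [0..8]) W0"


lemma allchk_ok: allchk
  by code_simp

definition TA :: "int list" where "TA = [0,5,7,3,1,0,7,3,5,0,7,2,4,5,7,2]"
definition TB :: "int list" where "TB = [0,4,6,2,0,8,6,2,4,0,7,2,4,5,7,2]"

definition Tf :: "bool \<Rightarrow> int \<Rightarrow> int" where
  "Tf bb t = (if bb then TB else TA) ! nat t"

definition rowshift :: "(int \<Rightarrow> bool) \<Rightarrow> int \<Rightarrow> int" where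
  "rowshift b y = Tf (b (y div 16)) (y mod 16)"

definition Sb :: "(int \<Rightarrow> bool) \<Rightarrow> vtx set" where
  "Sb b = {p. (fst p - rowshift b (snd p)) mod 9 \<in> {0,4}}"

definition dl :: "int list" where "dl = [-3,-2,-1,0,1,2,3]"

definition wloc :: "(int \<Rightarrow> bool) \<Rightarrow> int \<Rightarrow> int list" where
  "wloc b y = map (\<lambda>d. rowshift b (y + d)) dl"

definition wloc0 :: "int \<Rightarrow> bool \<Rightarrow> bool \<Rightarrow> bool \<Rightarrow> int list" where
  "wloc0 r b0 b1 b2 = map (\<lambda>d. if r + d < 0 then Tf b0 (r + d + 16)
      else if 16 \<le> r + d then Tf b2 (r + d - 16) else Tf b1 (r + d)) dl"

definition winchk :: bool where
  "winchk = list_all (\<lambda>r. list_all (\<lambda>b0. list_all (\<lambda>b1. list_all (\<lambda>b2.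
      (even r, wloc0 r b0 b1 b2) \<in> set W0) [False,True]) [False,True]) [False,True]) [0..15]"

lemma winchk_ok: winchk
  by code_simp

lemma dm16: "0 \<le> s \<Longrightarrow> s < 16 \<Longrightarrow> (16*q + s) div 16 = q \<and> (16*q + s) mod 16 = (s::int)"
  by simp

lemma rowshift_link:
  assumes "d \<in> set dl"
  shows "rowshift b (y + d) = (if y mod 16 + d < 0 then Tf (b (y div 16 - 1)) (y mod 16 + d + 16)
      else if 16 \<le> y mod 16 + d then Tf (b (y div 16 + 1)) (y mod 16 + d - 16)
      else Tf (b (y div 16)) (y mod 16 + d))"
proof -
  have d: "-3 \<le> d" "d \<le> 3" using assms by (auto simp: dl_def)
  have y: "y = 16*(y div 16) + y mod 16" by simp
  have r: "0 \<le> y mod 16" "y mod 16 < 16" by simp_all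
  have rs: "rowshift b (y + d) = Tf (b ((y + d) div 16)) ((y + d) mod 16)"
    by (simp only: rowshift_def)
  show ?thesis
  proof (cases "y mod 16 + d < 0")
    case True
    have e: "y + d = 16*(y div 16 - 1) + (y mod 16 + d + 16)" using y by (simp only: right_diff_distrib distrib_left; linarith)
    have "(y + d) div 16 = y div 16 - 1" "(y + d) mod 16 = y mod 16 + d + 16"
      unfolding e using dm16[of "y mod 16 + d + 16" "y div 16 - 1"] True d r by auto
    then show ?thesis using True rs by (simp only: if_True)
  next
    case F: False
    show ?thesis
    proof (cases "16 \<le> y mod 16 + d")
      case True
      have e: "y + d = 16*(y div 16 + 1) + (y mod 16 + d - 16)" using y by (simp only: right_diff_distrib distrib_left; linarith)
      have "(y + d) div 16 = y div 16 + 1" "(y + d) mod 16 = y mod 16 + d - 16"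
        unfolding e using dm16[of "y mod 16 + d - 16" "y div 16 + 1"] True d r by auto
      then show ?thesis using True F rs by (simp only: if_True if_False)
    next
      case False
      have e: "y + d = 16*(y div 16) + (y mod 16 + d)" using y by linarith
      have "(y + d) div 16 = y div 16" "(y + d) mod 16 = y mod 16 + d"
        unfolding e using dm16[of "y mod 16 + d" "y div 16"] False F d r by auto
      then show ?thesis using False F rs by (simp only: if_True if_False)
    qed
  qed
qed

lemma wloc_eq: "wloc b y = wloc0 (y mod 16) (b (y div 16 - 1)) (b (y div 16)) (b (y div 16 + 1))"
  unfolding wloc_def wloc0_def
  by (rule map_cong[OF refl]) (simp add: rowshift_link)

lemma wloc_in: "(even y, wloc b y) \<in> set W0"
proof -
  have r: "y mod 16 \<in> set [0..15]" by simp
  have e: "even (y mod 16) = even y" by (simp add: dvd_mod_iff)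
  have "\<forall>b0 b1 b2. (even (y mod 16), wloc0 (y mod 16) b0 b1 b2) \<in> set W0"
  proof (intro allI)
    fix b0 b1 b2
    have "b0 \<in> set [False,True]" "b1 \<in> set [False,True]" "b2 \<in> set [False,True]" by auto
    then show "(even (y mod 16), wloc0 (y mod 16) b0 b1 b2) \<in> set W0"
      using winchk_ok r unfolding winchk_def list_all_iff by blast
  qed
  then have h: "(even (y mod 16), wloc0 (y mod 16) (b (y div 16 - 1)) (b (y div 16)) (b (y div 16 + 1))) \<in> set W0"
    by blast
  show ?thesis using h by (simp only: wloc_eq e)
qed

lemma local_chk: "chk (even y) (map (\<lambda>v. (v - x) mod 9) (wloc b y))"
proof -
  have x0: "x mod 9 \<in> set [0..8]" by simp
  have "chk (even y) (map (\<lambda>v. (v - x mod 9) mod 9) (wloc b y))"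
    using allchk_ok wloc_in[of y b] x0 unfolding allchk_def list_all_iff by fastforce
  moreover have "map (\<lambda>v. (v - x mod 9) mod 9) (wloc b y) = map (\<lambda>v. (v - x) mod 9) (wloc b y)"
    by (simp add: mod_diff_right_eq)
  ultimately show ?thesis by simp
qed

lemma dl_nth: "-3 \<le> dy \<Longrightarrow> dy \<le> 3 \<Longrightarrow> dl ! nat (dy + 3) = dy \<and> nat (dy + 3) < length dl"
proof -
  assume "-3 \<le> dy" "dy \<le> 3"
  then have "dy = -3 \<or> dy = -2 \<or> dy = -1 \<or> dy = 0 \<or> dy = 1 \<or> dy = 2 \<or> dy = 3" by linarith
  then show ?thesis by (auto simp: dl_def)
qed

lemma inW_loc:
  assumes "-3 \<le> dy" "dy \<le> 3"
  shows "inW (map (\<lambda>v. (v - x) mod 9) (wloc b y)) dx dy \<longleftrightarrow> (x + dx, y + dy) \<in> Sb b"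
proof -
  have n: "(map (\<lambda>v. (v - x) mod 9) (wloc b y)) ! nat (dy + 3) = (rowshift b (y + dy) - x) mod 9"
    using dl_nth[OF assms] by (simp add: wloc_def)
  have "(dx - (rowshift b (y + dy) - x) mod 9) mod 9 = (x + dx - rowshift b (y + dy)) mod 9"
    by (simp add: mod_diff_right_eq algebra_simps)
  then show ?thesis using n by (simp add: inW_def Sb_def)
qed

lemma sq_le2: "(a::int)^2 \<le> 2 \<Longrightarrow> \<bar>a\<bar> \<le> 1"
proof (rule ccontr)
  assume h: "a^2 \<le> 2" "\<not> \<bar>a\<bar> \<le> 1"
  then have t: "2 \<le> \<bar>a\<bar>" by simp
  have "2 * 2 \<le> \<bar>a\<bar> * \<bar>a\<bar>" using mult_mono[OF t t] by simp
  then have "4 \<le> a^2" by (simp add: power2_eq_square)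
  then show False using h(1) by simp
qed

lemma abs1_sq: "\<bar>a::int\<bar> \<le> 1 \<Longrightarrow> a^2 \<le> 1"
proof -
  assume "\<bar>a\<bar> \<le> 1"
  then have "a = -1 \<or> a = 0 \<or> a = 1" by linarith
  then show ?thesis by (elim disjE) simp_all
qed

lemma king_adj_iff: "king_adj u v \<longleftrightarrow> u \<noteq> v \<and> \<bar>fst u - fst v\<bar> \<le> 1 \<and> \<bar>snd u - snd v\<bar> \<le> 1"
proof -
  have k: "(a::int)^2 + b^2 \<le> 2 \<longleftrightarrow> \<bar>a\<bar> \<le> 1 \<and> \<bar>b\<bar> \<le> 1" for a b
  proof
    assume h: "a^2 + b^2 \<le> 2"
    have "0 \<le> a^2" "0 \<le> b^2" by simp_all
    then have "a^2 \<le> 2" "b^2 \<le> 2" using h by linarith+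
    then show "\<bar>a\<bar> \<le> 1 \<and> \<bar>b\<bar> \<le> 1" using sq_le2 by blast
  next
    assume "\<bar>a\<bar> \<le> 1 \<and> \<bar>b\<bar> \<le> 1"
    then have "a^2 \<le> 1" "b^2 \<le> 1" using abs1_sq by blast+
    then show "a^2 + b^2 \<le> 2" by linarith
  qed
  have "real_of_int ((fst u - fst v)^2 + (snd u - snd v)^2) \<le> 2 \<longleftrightarrow> (fst u - fst v)^2 + (snd u - snd v)^2 \<le> 2"
    by linarith
  then show ?thesis unfolding king_adj_def using k by simp
qed

lemma off1_mem: "(i, j) \<in> set off1 \<Longrightarrow> \<bar>i\<bar> \<le> 1 \<and> \<bar>j\<bar> \<le> 1 \<and> (i, j) \<noteq> (0, 0)"
  unfolding off1_def by (simp only: set_simps insert_iff empty_iff) auto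

lemma off2_mem: "\<bar>i\<bar> \<le> 2 \<Longrightarrow> \<bar>j\<bar> \<le> 2 \<Longrightarrow> (i, j) \<noteq> (0, 0) \<Longrightarrow> (i, j) \<in> set off2"
proof -
  assume a: "\<bar>i\<bar> \<le> 2" "\<bar>j\<bar> \<le> 2" "(i, j) \<noteq> (0, 0)"
  have "i = -2 \<or> i = -1 \<or> i = 0 \<or> i = 1 \<or> i = 2" using a by linarith
  moreover have "j = -2 \<or> j = -1 \<or> j = 0 \<or> j = 1 \<or> j = 2" using a by linarith
  ultimately show ?thesis using a(3) unfolding off2_def by (elim disjE) simp_all
qed

lemma ru:
  fixes x x' a :: int
  assumes r1: "(x - a) mod 9 = 0 \<or> (x - a) mod 9 = 4" and r2: "(x' - a) mod 9 = 0 \<or> (x' - a) mod 9 = 4"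
    and "\<bar>x - x'\<bar> \<le> 2"
  shows "x = x'"
proof -
  have d: "x - x' = -2 \<or> x - x' = -1 \<or> x - x' = 0 \<or> x - x' = 1 \<or> x - x' = 2" using assms(3) by linarith
  have "((x - a) mod 9 - (x' - a) mod 9) mod 9 = ((x - a) - (x' - a)) mod 9" by (rule mod_diff_eq)
  then have m: "(x - x') mod 9 = ((x - a) mod 9 - (x' - a) mod 9) mod 9" by simp
  have "(x - x') mod 9 = 0 \<or> (x - x') mod 9 = 4 \<or> (x - x') mod 9 = 5" using r1 r2 m by auto
  then show ?thesis using d by auto
qed

lemma row_unique:
  assumes "(x, y) \<in> Sb b" "(x', y) \<in> Sb b" "\<bar>x - x'\<bar> \<le> 2"
  shows "x = x'"
proof -
  define a where "a = rowshift b y"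
  have r: "(x - a) mod 9 = 0 \<or> (x - a) mod 9 = 4" "(x' - a) mod 9 = 0 \<or> (x' - a) mod 9 = 4"
    using assms(1,2) by (auto simp: Sb_def a_def)
  show ?thesis by (rule ru[OF r(1) r(2) assms(3)])
qed

lemma adj_shift: "king_adj (x + a, y + c) (x + p, y + q) \<longleftrightarrow> adjo (a, c) (p, q)"
  unfolding king_adj_iff adjo_def by auto

lemma chk_unfold:
  assumes "chk par w"
  shows "inW w 0 0 \<or> (\<exists>(i,j)\<in>set off1. inW w i j)"
    and "inW w 0 0 \<Longrightarrow> \<exists>i\<in>{-1..1}. inW w i (if par then 1 else -1)"
    and "\<not> inW w 0 0 \<Longrightarrow> v \<in> set off2 \<Longrightarrow> chkv w v"
  using assms unfolding chk_def list_ex_iff list_all_iff by auto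

lemma dominate:
  "\<exists>z\<in>Sb b. z = (x, y) \<or> king_adj (x, y) z"
proof -
  let ?w = "map (\<lambda>v. (v - x) mod 9) (wloc b y)"
  have "inW ?w 0 0 \<or> (\<exists>(i,j)\<in>set off1. inW ?w i j)"
    using chk_unfold(1)[OF local_chk] by blast
  then show ?thesis
  proof
    assume "inW ?w 0 0"
    then have "(x, y) \<in> Sb b" using inW_loc[of 0 x b y 0] by simp
    then show ?thesis by blast
  next
    assume "\<exists>(i,j)\<in>set off1. inW ?w i j"
    then obtain i j where ij: "(i, j) \<in> set off1" "inW ?w i j" by blast
    have o: "\<bar>i\<bar> \<le> 1" "\<bar>j\<bar> \<le> 1" "(i, j) \<noteq> (0, 0)" using off1_mem[OF ij(1)] by auto
    then have "(x + i, y + j) \<in> Sb b" using inW_loc[of j x b y i] ij(2) by simp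
    moreover have "king_adj (x, y) (x + i, y + j)" using o unfolding king_adj_iff by auto
    ultimately show ?thesis by blast
  qed
qed

lemma partner:
  assumes "(x, y) \<in> Sb b"
  shows "\<exists>i. \<bar>i\<bar> \<le> 1 \<and> (x + i, y + (if even y then 1 else -1)) \<in> Sb b"
proof -
  let ?w = "map (\<lambda>v. (v - x) mod 9) (wloc b y)"
  have "inW ?w 0 0" using inW_loc[of 0 x b y 0] assms by simp
  then obtain i where i: "i \<in> {-1..1}" "inW ?w i (if even y then 1 else -1)"
    using chk_unfold(2)[OF local_chk] by blast
  have "(x + i, y + (if even y then 1 else -1)) \<in> Sb b"
    using inW_loc[of "if even y then 1 else -1" x b y i] i(2) by simp
  moreover have "\<bar>i\<bar> \<le> 1" using i(1) by auto
  ultimately show ?thesis by blast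
qed

lemma locating:
  assumes u: "u \<notin> Sb b" and v: "v \<notin> Sb b" and uv: "u \<noteq> v"
  shows "nbh u \<inter> Sb b \<noteq> nbh v \<inter> Sb b"
proof
  assume eq: "nbh u \<inter> Sb b = nbh v \<inter> Sb b"
  obtain x y where ux: "u = (x, y)" by force
  let ?w = "map (\<lambda>v. (v - x) mod 9) (wloc b y)"
  obtain z where z: "z \<in> Sb b" "z = (x, y) \<or> king_adj (x, y) z" using dominate by blast
  then have zu: "king_adj u z" using u ux by auto
  then have "z \<in> nbh v \<inter> Sb b" using eq z(1) by (auto simp: nbh_def)
  then have zv: "king_adj v z" by (auto simp: nbh_def)
  define dx where "dx = fst v - x"
  define dy where "dy = snd v - y"
  have vv: "v = (x + dx, y + dy)" by (simp add: dx_def dy_def)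
  have "\<bar>dx\<bar> \<le> 2" "\<bar>dy\<bar> \<le> 2" using zu zv ux unfolding king_adj_iff dx_def dy_def by auto
  moreover have "(dx, dy) \<noteq> (0, 0)" using uv ux vv by auto
  ultimately have off: "(dx, dy) \<in> set off2" by (rule off2_mem)
  have n0: "\<not> inW ?w 0 0" using inW_loc[of 0 x b y 0] u ux by simp
  have c: "chkv ?w (dx, dy)" by (rule chk_unfold(3)[OF local_chk n0 off])
  have nv: "\<not> inW ?w dx dy" using inW_loc[of dy x b y dx] v vv \<open>\<bar>dy\<bar> \<le> 2\<close> by simp
  show False
  proof -
    have "(\<exists>(p,q)\<in>set off1. inW ?w p q \<and> \<not> adjo (dx, dy) (p, q)) \<or>
          (\<exists>(p,q)\<in>set off1. inW ?w (dx + p) (dy + q) \<and> \<not> adjo (0, 0) (dx + p, dy + q))"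
      using c nv unfolding chkv_def list_ex_iff by auto
    then show False
    proof
      assume "\<exists>(p,q)\<in>set off1. inW ?w p q \<and> \<not> adjo (dx, dy) (p, q)"
      then obtain p q where pq: "(p, q) \<in> set off1" "inW ?w p q" "\<not> adjo (dx, dy) (p, q)" by blast
      have o: "\<bar>p\<bar> \<le> 1" "\<bar>q\<bar> \<le> 1" "(p, q) \<noteq> (0, 0)" using off1_mem[OF pq(1)] by auto
      have inS: "(x + p, y + q) \<in> Sb b" using inW_loc[of q x b y p] pq(2) o by simp
      have "king_adj u (x + p, y + q)" using ux o unfolding king_adj_iff by auto
      then have "(x + p, y + q) \<in> nbh v \<inter> Sb b" using eq inS by (auto simp: nbh_def)
      then have "king_adj (x + dx, y + dy) (x + p, y + q)" using vv by (simp add: nbh_def)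
      then show False using pq(3) adj_shift by blast
    next
      assume "\<exists>(p,q)\<in>set off1. inW ?w (dx + p) (dy + q) \<and> \<not> adjo (0, 0) (dx + p, dy + q)"
      then obtain p q where pq: "(p, q) \<in> set off1" "inW ?w (dx + p) (dy + q)" "\<not> adjo (0, 0) (dx + p, dy + q)" by blast
      have o: "\<bar>p\<bar> \<le> 1" "\<bar>q\<bar> \<le> 1" "(p, q) \<noteq> (0, 0)" using off1_mem[OF pq(1)] by auto
      have inS: "(x + (dx + p), y + (dy + q)) \<in> Sb b"
        using inW_loc[of "dy + q" x b y "dx + p"] pq(2) o \<open>\<bar>dy\<bar> \<le> 2\<close> by simp
      have "king_adj v (x + (dx + p), y + (dy + q))" using vv o unfolding king_adj_iff by auto
      then have "(x + (dx + p), y + (dy + q)) \<in> nbh u \<inter> Sb b" using eq inS by (auto simp: nbh_def)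
      then have "king_adj (x + 0, y + 0) (x + (dx + p), y + (dy + q))" using ux by (simp add: nbh_def)
      then show False using pq(3) adj_shift by blast
    qed
  qed
qed

lemma matching: "has_perfect_matching (Sb b)"
proof -
  define M where "M = {{u, v} | u v. u \<in> Sb b \<and> v \<in> Sb b \<and> king_adj u v \<and> even (snd u) \<and> snd v = snd u + 1}"
  have A: "\<forall>e\<in>M. \<exists>a c. e = {a, c} \<and> a \<in> Sb b \<and> c \<in> Sb b \<and> king_adj a c"
    unfolding M_def by blast
  have uniq: "v = v'" if "v \<in> Sb b" "v' \<in> Sb b" "king_adj u v" "king_adj u v'" "snd v = snd v'" for u v v'
  proof -
    obtain x1 y1 where 1: "v = (x1, y1)" by force
    obtain x2 y2 where 2: "v' = (x2, y2)" by force
    have "\<bar>x1 - x2\<bar> \<le> 2" using that 1 2 unfolding king_adj_iff by auto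
    then have "x1 = x2" using row_unique[of x1 y1 b x2] that 1 2 by auto
    then show ?thesis using 1 2 that by auto
  qed
  have B: "\<forall>e\<in>M. \<forall>e'\<in>M. e \<noteq> e' \<longrightarrow> e \<inter> e' = {}"
  proof (intro ballI impI)
    fix e e' assume e: "e \<in> M" and e': "e' \<in> M" and ne: "e \<noteq> e'"
    obtain u v where euv: "e = {u, v}" "u \<in> Sb b" "v \<in> Sb b" "king_adj u v" "even (snd u)" "snd v = snd u + 1"
      using e unfolding M_def by blast
    obtain u' v' where euv': "e' = {u', v'}" "u' \<in> Sb b" "v' \<in> Sb b" "king_adj u' v'" "even (snd u')" "snd v' = snd u' + 1"
      using e' unfolding M_def by blast
    show "e \<inter> e' = {}"
    proof (rule ccontr)
      assume "e \<inter> e' \<noteq> {}"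
      then obtain z where z: "z \<in> e" "z \<in> e'" by blast
      have sym: "king_adj a c \<Longrightarrow> king_adj c a" for a c unfolding king_adj_iff by auto
      consider "z = u" "z = u'" | "z = v" "z = v'" | "z = u" "z = v'" | "z = v" "z = u'"
        using z euv(1) euv'(1) by blast
      then show False
      proof cases
        case 1
        then have "v = v'" using uniq[of v v' u] euv euv' by auto
        then show False using ne euv(1) euv'(1) 1 by auto
      next
        case 2
        then have "u = u'" using uniq[of u u' v] euv euv' sym by auto
        then show False using ne euv(1) euv'(1) 2 by auto
      next
        case 3
        then show False using euv(5) euv'(5,6) by auto
      next
        case 4
        then show False using euv(5,6) euv'(5) by auto
      qed
    qed
  qed
  have C: "\<forall>v\<in>Sb b. \<exists>e\<in>M. v \<in> e"
  proof
    fix v assume v: "v \<in> Sb b"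
    obtain x y where xy: "v = (x, y)" by force
    obtain i where i: "\<bar>i\<bar> \<le> 1" "(x + i, y + (if even y then 1 else -1)) \<in> Sb b"
      using partner[of x y b] v xy by blast
    show "\<exists>e\<in>M. v \<in> e"
    proof (cases "even y")
      case True
      have "king_adj (x, y) (x + i, y + 1)" using i(1) unfolding king_adj_iff by auto
      then have "{(x, y), (x + i, y + 1)} \<in> M" unfolding M_def using v xy i True by fastforce
      then show ?thesis using xy by blast
    next
      case False
      have "king_adj (x + i, y - 1) (x, y)" using i(1) unfolding king_adj_iff by auto
      moreover have "even (y - 1)" using False by simp
      ultimately have "{(x + i, y - 1), (x, y)} \<in> M" unfolding M_def using v xy i False by fastforce
      then show ?thesis using xy by blast
    qed
  qed
  show ?thesis unfolding has_perfect_matching_def using A B C by blast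
qed

lemma LPDS_Sb: "is_LPDS (Sb b)"
  unfolding is_LPDS_def
proof (intro conjI allI impI)
  fix v :: vtx
  obtain x y where v: "v = (x, y)" by force
  obtain z where "z \<in> Sb b" "z = (x, y) \<or> king_adj (x, y) z" using dominate by blast
  then show "cnbh v \<inter> Sb b \<noteq> {}" using v by (auto simp: cnbh_def nbh_def)
next
  show "has_perfect_matching (Sb b)" by (rule matching)
next
  fix u v assume "u \<notin> Sb b" "v \<notin> Sb b" "u \<noteq> v"
  then show "nbh u \<inter> Sb b \<noteq> nbh v \<inter> Sb b" by (rule locating)
qed


lemma walk_bound: "walk n u v \<Longrightarrow> \<bar>fst u - fst v\<bar> \<le> int n \<and> \<bar>snd u - snd v\<bar> \<le> int n"
proof (induction n arbitrary: u)
  case 0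
  then show ?case by simp
next
  case (Suc n)
  then obtain w where w: "king_adj u w" "walk n w v" by auto
  have "\<bar>fst w - fst v\<bar> \<le> int n \<and> \<bar>snd w - snd v\<bar> \<le> int n" using Suc.IH w(2) by blast
  moreover have "\<bar>fst u - fst w\<bar> \<le> 1" "\<bar>snd u - snd w\<bar> \<le> 1" using w(1) unfolding king_adj_iff by auto
  ultimately show ?case by auto
qed

lemma sgn_step: "\<bar>(d::int) - sgn d\<bar> = (if d = 0 then 0 else \<bar>d\<bar> - 1)"
  by (auto simp: sgn_if abs_if)

lemma walk_exists: "max \<bar>fst u - fst v\<bar> \<bar>snd u - snd v\<bar> = int n \<Longrightarrow> walk n u v"
proof (induction n arbitrary: u)
  case 0
  then have "fst u = fst v" "snd u = snd v" by (auto simp: max_def split: if_splits)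
  then show ?case by (simp add: prod_eq_iff)
next
  case (Suc n)
  define dx where "dx = fst v - fst u"
  define dy where "dy = snd v - snd u"
  define w where "w = (fst u + sgn dx, snd u + sgn dy)"
  have m: "max \<bar>dx\<bar> \<bar>dy\<bar> = int n + 1" using Suc.prems by (simp add: dx_def dy_def abs_minus_commute)
  have "fst w - fst v = -(dx - sgn dx)" "snd w - snd v = -(dy - sgn dy)"
    by (simp_all add: w_def dx_def dy_def)
  then have a: "\<bar>fst w - fst v\<bar> = (if dx = 0 then 0 else \<bar>dx\<bar> - 1)"
    "\<bar>snd w - snd v\<bar> = (if dy = 0 then 0 else \<bar>dy\<bar> - 1)"
    by (simp_all only: abs_minus_cancel sgn_step)
  have "max \<bar>fst w - fst v\<bar> \<bar>snd w - snd v\<bar> = int n"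
    unfolding a using m by (auto simp: max_def split: if_splits)
  then have "walk n w v" by (rule Suc.IH)
  moreover have "king_adj u w"
  proof -
    have s: "\<bar>sgn dx\<bar> \<le> 1" "\<bar>sgn dy\<bar> \<le> 1" by (simp_all add: abs_sgn_eq)
    have "dx \<noteq> 0 \<or> dy \<noteq> 0" using m by (auto simp: max_def split: if_splits)
    then have ne: "u \<noteq> w" by (auto simp: w_def prod_eq_iff sgn_0_0)
    have "fst u - fst w = - sgn dx" "snd u - snd w = - sgn dy" by (simp_all add: w_def)
    then show ?thesis using ne s unfolding king_adj_iff by simp
  qed
  ultimately show ?case unfolding walk.simps by blast
qed

lemma gdist_eq: "gdist u v = nat (max \<bar>fst u - fst v\<bar> \<bar>snd u - snd v\<bar>)"
  unfolding gdist_def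
proof (rule Least_equality)
  show "walk (nat (max \<bar>fst u - fst v\<bar> \<bar>snd u - snd v\<bar>)) u v"
    by (rule walk_exists) (simp add: le_max_iff_disj)
next
  fix n assume "walk n u v"
  then show "nat (max \<bar>fst u - fst v\<bar> \<bar>snd u - snd v\<bar>) \<le> n"
    using walk_bound by fastforce
qed

lemma ball0: "ball_k k (0, 0) = {- int k..int k} \<times> {- int k..int k}"
  unfolding ball_k_def gdist_eq by (auto simp: max_def)

lemma modeq1:
  fixes x m c :: int
  assumes "m \<le> x" "x < m + 9" "(x - c) mod 9 = 0"
  shows "x = m + (c - m) mod 9"
proof -
  have "x - m = (x - m) mod 9" using assms by simp
  also have "(x - m) mod 9 = ((c - m) + (x - c)) mod 9" by simp
  also have "\<dots> = ((c - m) + (x - c) mod 9) mod 9" by (simp add: mod_add_right_eq)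
  also have "\<dots> = (c - m) mod 9" using assms by simp
  finally show ?thesis by simp
qed

lemma modeq2:
  fixes x m c :: int
  assumes "x = m + (c - m) mod 9"
  shows "m \<le> x \<and> x < m + 9 \<and> (x - c) mod 9 = 0"
proof -
  have "0 \<le> (c - m) mod 9" "(c - m) mod 9 < 9" by simp_all
  moreover have "(x - c) mod 9 = ((c - m) mod 9 - (c - m)) mod 9" using assms by (simp add: algebra_simps)
  moreover have "((c - m) mod 9 - (c - m)) mod 9 = 0" by (simp add: mod_diff_left_eq)
  ultimately show ?thesis using assms by simp
qed

lemma mod4: "((x::int) - a) mod 9 = 4 \<longleftrightarrow> (x - (a + 4)) mod 9 = 0"
proof -
  have "(x - a) mod 9 = 4 \<longleftrightarrow> (x - a) mod 9 = 4 mod 9" by simp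
  also have "\<dots> \<longleftrightarrow> 9 dvd (x - a) - 4" by (rule mod_eq_dvd_iff)
  also have "(x - a) - 4 = x - (a + 4)" by simp
  also have "9 dvd x - (a + 4) \<longleftrightarrow> (x - (a + 4)) mod 9 = 0" by (rule dvd_eq_mod_eq_0)
  finally show ?thesis .
qed

lemma cnt9: "card {x \<in> {m..<m+9}. (x - a) mod 9 \<in> {0, 4::int}} = 2"
proof -
  have e: "{x \<in> {m..<m+9}. (x - a) mod 9 \<in> {0, 4::int}} = {m + (a - m) mod 9, m + (a + 4 - m) mod 9}"
  proof (intro set_eqI iffI)
    fix x assume "x \<in> {x \<in> {m..<m+9}. (x - a) mod 9 \<in> {0, 4::int}}"
    then have "x \<in> {m..<m+9} \<and> (x - a) mod 9 \<in> {0, 4}" by (simp only: mem_Collect_eq)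
    then have h1: "m \<le> x" "x < m + 9" "(x - a) mod 9 = 0 \<or> (x - a) mod 9 = 4"
      by (simp_all only: atLeastLessThan_iff insert_iff empty_iff simp_thms)
    then have h3: "(x - a) mod 9 = 0 \<or> (x - (a + 4)) mod 9 = 0" using mod4[of x a] by (simp only:)
    from h3 show "x \<in> {m + (a - m) mod 9, m + (a + 4 - m) mod 9}"
    proof
      assume "(x - a) mod 9 = 0"
      then have "x = m + (a - m) mod 9" by (rule modeq1[OF h1(1) h1(2)])
      then show ?thesis by blast
    next
      assume "(x - (a + 4)) mod 9 = 0"
      then have "x = m + (a + 4 - m) mod 9" by (rule modeq1[OF h1(1) h1(2)])
      then show ?thesis by blast
    qed
  next
    fix x assume "x \<in> {m + (a - m) mod 9, m + (a + 4 - m) mod 9}"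
    then have "x = m + (a - m) mod 9 \<or> x = m + (a + 4 - m) mod 9" by blast
    then have "m \<le> x \<and> x < m + 9 \<and> ((x - a) mod 9 = 0 \<or> (x - (a + 4)) mod 9 = 0)"
    proof
      assume "x = m + (a - m) mod 9"
      then show ?thesis using modeq2[of x m a] by blast
    next
      assume "x = m + (a + 4 - m) mod 9"
      then show ?thesis using modeq2[of x m "a + 4"] by blast
    qed
    then have "m \<le> x \<and> x < m + 9 \<and> ((x - a) mod 9 = 0 \<or> (x - a) mod 9 = 4)" using mod4[of x a] by (simp only:)
    then show "x \<in> {x \<in> {m..<m+9}. (x - a) mod 9 \<in> {0, 4::int}}"
      by (simp only: mem_Collect_eq atLeastLessThan_iff insert_iff empty_iff simp_thms)
  qed
  have ne: "m + (a - m) mod 9 \<noteq> m + (a + 4 - m) mod 9"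
  proof
    assume "m + (a - m) mod 9 = m + (a + 4 - m) mod 9"
    then have "(a + 4 - m) mod 9 = (a - m) mod 9" by simp
    then have "(9::int) dvd (a + 4 - m) - (a - m)" by (simp add: mod_eq_dvd_iff)
    then show False by simp
  qed
  have c: "card {m + (a - m) mod 9, m + (a + 4 - m) mod 9} = 2"
    using ne by (simp only: card_2_iff) blast
  show ?thesis unfolding e by (rule c)
qed

definition pr9 :: "int \<Rightarrow> int \<Rightarrow> bool" where
  "pr9 a x = ((x - a) mod 9 \<in> {0, 4})"

lemma cnt9': "card {x \<in> {m..<m+9}. pr9 a x} = 2"
  unfolding pr9_def by (rule cnt9)

lemma fin_filter: "finite {x \<in> {p..<q}. P x}" for p q :: int
  by (rule finite_subset[of _ "{p..<q}"]) auto

lemma cntmul: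
  assumes c9: "\<And>m. card {x \<in> {m..<m+9}. P x} = 2"
  shows "card {x \<in> {m..<m + 9 * int t}. P x} = 2 * t"
proof (induction t)
  case 0
  then show ?case by simp
next
  case (Suc t)
  have e: "{x \<in> {m..<m + 9 * int (Suc t)}. P x} =
    {x \<in> {m..<m + 9 * int t}. P x} \<union> {x \<in> {(m + 9 * int t)..<(m + 9 * int t) + 9}. P x}"
    by auto
  have "card ({x \<in> {m..<m + 9 * int t}. P x} \<union> {x \<in> {(m + 9 * int t)..<(m + 9 * int t) + 9}. P x}) =
    card {x \<in> {m..<m + 9 * int t}. P x} + card {x \<in> {(m + 9 * int t)..<(m + 9 * int t) + 9}. P x}"
    by (rule card_Un_disjoint[OF fin_filter fin_filter]) auto
  then show ?case unfolding e using Suc.IH c9[of "m + 9 * int t"] by simp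
qed

lemma cnt_bounds:
  assumes c9: "\<And>m. card {x \<in> {m..<m+9}. P x} = 2"
  assumes "0 \<le> n"
  shows "2 * nat (n div 9) \<le> card {x \<in> {m..<m + n}. P x}"
    and "card {x \<in> {m..<m + n}. P x} \<le> 2 * nat (n div 9) + 2"
proof -
  define t where "t = nat (n div 9)"
  have t1: "9 * int t \<le> n" "n < 9 * int t + 9" using assms unfolding t_def by auto
  have "{x \<in> {m..<m + 9 * int t}. P x} \<subseteq> {x \<in> {m..<m + n}. P x}"
    using t1 by auto
  then have "card {x \<in> {m..<m + 9 * int t}. P x} \<le> card {x \<in> {m..<m + n}. P x}"
    by (rule card_mono[rotated]) (rule fin_filter)
  then show "2 * nat (n div 9) \<le> card {x \<in> {m..<m + n}. P x}"
    using cntmul[OF c9, of m t] unfolding t_def by simp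
  have "{x \<in> {m..<m + n}. P x} \<subseteq> {x \<in> {m..<m + 9 * int (Suc t)}. P x}"
    using t1 by auto
  then have "card {x \<in> {m..<m + n}. P x} \<le> card {x \<in> {m..<m + 9 * int (Suc t)}. P x}"
    by (rule card_mono[rotated]) (rule fin_filter)
  moreover have "card {x \<in> {m..<m + 9 * int (Suc t)}. P x} = 2 * Suc t"
    by (rule cntmul[OF c9])
  ultimately show "card {x \<in> {m..<m + n}. P x} \<le> 2 * nat (n div 9) + 2"
    unfolding t_def by simp
qed


lemma Sb_pr9: "(x, y) \<in> Sb b \<longleftrightarrow> pr9 (rowshift b y) x"
  by (simp add: Sb_def pr9_def)

definition Rw :: "(int \<Rightarrow> bool) \<Rightarrow> nat \<Rightarrow> int \<Rightarrow> int set" where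
  "Rw b k y = {x \<in> {- int k..<- int k + (2 * int k + 1)}. pr9 (rowshift b y) x}"

lemma Rw_bounds:
  "2 * nat ((2 * int k + 1) div 9) \<le> card (Rw b k y)"
  "card (Rw b k y) \<le> 2 * nat ((2 * int k + 1) div 9) + 2"
  unfolding Rw_def by (rule cnt_bounds(1)[OF cnt9'], simp) (rule cnt_bounds(2)[OF cnt9'], simp)

lemma fin_Rw: "finite (Rw b k y)"
  unfolding Rw_def by (rule fin_filter)

lemma inter_eq: "Sb b \<inter> ball_k k (0, 0) = (\<lambda>(y, x). (x, y)) ` (SIGMA y:{- int k..int k}. Rw b k y)"
proof (intro set_eqI iffI)
  fix p assume "p \<in> Sb b \<inter> ball_k k (0, 0)"
  then obtain x y where p: "p = (x, y)" "pr9 (rowshift b y) x" "- int k \<le> x" "x \<le> int k" "- int k \<le> y" "y \<le> int k"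
    unfolding ball0 by (cases p) (auto simp: Sb_pr9)
  then have "(y, x) \<in> (SIGMA y:{- int k..int k}. Rw b k y)" unfolding Rw_def by auto
  then show "p \<in> (\<lambda>(y, x). (x, y)) ` (SIGMA y:{- int k..int k}. Rw b k y)" using p(1) by force
next
  fix p assume "p \<in> (\<lambda>(y, x). (x, y)) ` (SIGMA y:{- int k..int k}. Rw b k y)"
  then obtain x y where p: "p = (x, y)" "y \<in> {- int k..int k}" "x \<in> Rw b k y" by auto
  then have "pr9 (rowshift b y) x" "- int k \<le> x" "x \<le> int k" unfolding Rw_def by auto
  then show "p \<in> Sb b \<inter> ball_k k (0, 0)" using p unfolding ball0 by (auto simp: Sb_pr9)
qed

lemma card_inter: "card (Sb b \<inter> ball_k k (0, 0)) = (\<Sum>y\<in>{- int k..int k}. card (Rw b k y))"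
proof -
  have "inj_on (\<lambda>(y, x). (x, y)) (SIGMA y:{- int k..int k}. Rw b k y)"
    by (auto simp: inj_on_def)
  then have "card (Sb b \<inter> ball_k k (0, 0)) = card (SIGMA y:{- int k..int k}. Rw b k y)"
    unfolding inter_eq by (rule card_image)
  also have "\<dots> = (\<Sum>y\<in>{- int k..int k}. card (Rw b k y))"
    using fin_Rw by simp
  finally show ?thesis .
qed

lemma card_ball: "card (ball_k k (0, 0)) = (2 * k + 1) * (2 * k + 1)"
proof -
  have "card {- int k..int k} = 2 * k + 1" by simp
  then show ?thesis unfolding ball0 card_cartesian_product by simp
qed

lemma rb:
  fixes n C T :: real
  assumes n0: "0 < n" and t1: "9 * T \<le> n" "n < 9 * T + 9" and lo': "n * (2 * T) \<le> C" and hi': "C \<le> n * (2 * T + 2)"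
  shows "2/9 - 2/n \<le> C / (n * n)" and "C / (n * n) \<le> 2/9 + 2/n"
proof -
  have A: "n * (2 * (n - 9)) \<le> n * (2 * (9 * T))"
    using t1 n0 by (intro mult_left_mono) auto
  have B: "n * (2 * (9 * T) + 18) \<le> n * (2 * n + 18)"
    using t1 n0 by (intro mult_left_mono) auto
  have l: "n * (2 * (n - 9)) \<le> 9 * C" using A lo' by (simp add: algebra_simps)
  have h: "9 * C \<le> n * (2 * n + 18)" using B hi' by (simp add: algebra_simps)
  have nn: "0 < n * n" using n0 by simp
  have e1: "(2/9 - 2/n) * (n * n) = n * (2 * (n - 9)) / 9" using n0 by (simp add: field_simps)
  have e2: "(2/9 + 2/n) * (n * n) = n * (2 * n + 18) / 9" using n0 by (simp add: field_simps)
  have "(2/9 - 2/n) * (n * n) \<le> C" using e1 l by linarith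
  then show "2/9 - 2/n \<le> C / (n * n)" using nn by (simp add: le_divide_eq)
  have "C \<le> (2/9 + 2/n) * (n * n)" using e2 h by linarith
  then show "C / (n * n) \<le> 2/9 + 2/n" using nn by (simp add: divide_le_eq)
qed

lemma ratio_bounds:
  fixes k :: nat
  defines "n \<equiv> real (2 * k + 1)"
  shows "2/9 - 2/n \<le> real (card (Sb b \<inter> ball_k k (0, 0))) / real (card (ball_k k (0, 0)))"
    and "real (card (Sb b \<inter> ball_k k (0, 0))) / real (card (ball_k k (0, 0))) \<le> 2/9 + 2/n"
proof -
  define t where "t = nat ((2 * int k + 1) div 9)"
  define C where "C = card (Sb b \<inter> ball_k k (0, 0))"
  have n0: "0 < n" unfolding n_def by simp
  have "9 * int t \<le> 2 * int k + 1" "2 * int k + 1 < 9 * int t + 9" unfolding t_def by auto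
  then have t1: "9 * real t \<le> n" "n < 9 * real t + 9" unfolding n_def by linarith+
  have cs: "C = (\<Sum>y\<in>{- int k..int k}. card (Rw b k y))" unfolding C_def by (rule card_inter)
  have ck: "card {- int k..int k} = 2 * k + 1" by simp
  have "of_nat (card {- int k..int k}) * (2 * t) \<le> (\<Sum>y\<in>{- int k..int k}. card (Rw b k y))"
    by (rule sum_bounded_below) (use Rw_bounds(1) t_def in auto)
  then have lo: "(2 * k + 1) * (2 * t) \<le> C" using cs ck by simp
  have "(\<Sum>y\<in>{- int k..int k}. card (Rw b k y)) \<le> of_nat (card {- int k..int k}) * (2 * t + 2)"
    by (rule sum_bounded_above) (use Rw_bounds(2) t_def in auto)
  then have hi: "C \<le> (2 * k + 1) * (2 * t + 2)" using cs ck by simp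
  have "real ((2 * k + 1) * (2 * t)) \<le> real C" using lo by (simp only: of_nat_le_iff)
  moreover have "real ((2 * k + 1) * (2 * t)) = n * (2 * real t)" unfolding n_def by (simp add: algebra_simps)
  ultimately have lo': "n * (2 * real t) \<le> real C" by linarith
  have "real C \<le> real ((2 * k + 1) * (2 * t + 2))" using hi by (simp only: of_nat_le_iff)
  moreover have "real ((2 * k + 1) * (2 * t + 2)) = n * (2 * real t + 2)" unfolding n_def by (simp add: algebra_simps)
  ultimately have hi': "real C \<le> n * (2 * real t + 2)" by linarith
  have cb: "real (card (ball_k k (0, 0))) = n * n" unfolding card_ball n_def by (simp add: algebra_simps)
  show "2/9 - 2/n \<le> real (card (Sb b \<inter> ball_k k (0, 0))) / real (card (ball_k k (0, 0)))"
    unfolding C_def[symmetric] cb by (rule rb(1)[OF n0 t1 lo' hi'])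
  show "real (card (Sb b \<inter> ball_k k (0, 0))) / real (card (ball_k k (0, 0))) \<le> 2/9 + 2/n"
    unfolding C_def[symmetric] cb by (rule rb(2)[OF n0 t1 lo' hi'])
qed

lemma density_Sb: "density_at (0, 0) (Sb b) = ereal (2 / 9)"
proof -
  define f where "f k = real (card (Sb b \<inter> ball_k k (0, 0))) / real (card (ball_k k (0, 0)))" for k
  have l1: "(\<lambda>k::nat. 2/9 - 2 / real (2 * k + 1)) \<longlonglongrightarrow> 2/9" by real_asymp
  have l2: "(\<lambda>k::nat. 2/9 + 2 / real (2 * k + 1)) \<longlonglongrightarrow> 2/9" by real_asymp
  have e1: "\<forall>\<^sub>F k in sequentially. 2/9 - 2 / real (2 * k + 1) \<le> f k"
    by (intro always_eventually allI) (unfold f_def, rule ratio_bounds(1))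
  have e2: "\<forall>\<^sub>F k in sequentially. f k \<le> 2/9 + 2 / real (2 * k + 1)"
    by (intro always_eventually allI) (unfold f_def, rule ratio_bounds(2))
  have "f \<longlonglongrightarrow> 2/9"
    by (rule tendsto_sandwich[OF e1 e2 l1 l2])
  then have "(\<lambda>k. ereal (f k)) \<longlonglongrightarrow> ereal (2/9)" by (rule tendsto_ereal)
  then have "limsup (\<lambda>k. ereal (f k)) = ereal (2/9)"
    by (rule lim_imp_Limsup[OF trivial_limit_sequentially])
  then show ?thesis unfolding density_at_def f_def by simp
qed

definition bits :: "nat set \<Rightarrow> int \<Rightarrow> bool" where
  "bits B j = (0 \<le> j \<and> nat j \<in> B)"

lemma probe: "(5, 16 * int n + 1) \<in> Sb (bits B) \<longleftrightarrow> n \<notin> B"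
proof -
  have "(16 * int n + 1) div 16 = int n" "(16 * int n + 1) mod 16 = 1" by simp_all
  then have "rowshift (bits B) (16 * int n + 1) = (if n \<in> B then 4 else 5)"
    by (simp add: rowshift_def bits_def Tf_def TA_def TB_def)
  then show ?thesis by (simp add: Sb_def)
qed

lemma inj_Sb: "inj (\<lambda>B. Sb (bits B))"
proof (rule injI)
  fix B B' assume "Sb (bits B) = Sb (bits B')"
  then have "\<forall>n. n \<in> B \<longleftrightarrow> n \<in> B'" using probe by metis
  then show "B = B'" by blast
qed

lemma unc_nat_sets: "uncountable (UNIV :: nat set set)"
  unfolding uncountable_def
proof (intro conjI)
  show "(UNIV :: nat set set) \<noteq> {}" by simp
next
  show "\<not> (\<exists>f :: nat \<Rightarrow> nat set. range f = UNIV)"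
  proof
  assume "\<exists>f :: nat \<Rightarrow> nat set. range f = UNIV"
  then obtain f :: "nat \<Rightarrow> nat set" where f: "range f = UNIV" by blast
  have "{n. n \<notin> f n} \<in> range f" using f by simp
  then obtain m where "{n. n \<notin> f n} = f m" by blast
  then show False by blast
  qed
qed

theorem theorem5:
  shows "uncountable {S :: vtx set. is_LPDS S \<and> density_at (0, 0) S = ereal (2 / 9)}"
proof
  assume c: "countable {S :: vtx set. is_LPDS S \<and> density_at (0, 0) S = ereal (2 / 9)}"
  have "range (\<lambda>B. Sb (bits B)) \<subseteq> {S :: vtx set. is_LPDS S \<and> density_at (0, 0) S = ereal (2 / 9)}"
    using LPDS_Sb density_Sb by blast
  then have "countable (range (\<lambda>B. Sb (bits B)))" using c countable_subset by blast
  then have "countable (UNIV :: nat set set)"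
    using countable_image_inj_on inj_Sb by blast
  then show False using unc_nat_sets by blast
qed

end
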